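(* Let $\Pi=(\iota,\tau,\beta)$ be a safety problem over a vocabulary $\Sigma$, let $w$ be a fresh constant symbol, and let $\varphi(x)$ be a formula over $\Sigma$ with free variable $x$. Then $\varphi(w)$ is a sound prophecy for $\Pi$ if and only if the following safety problem over the vocabulary $\Sigma\cup\{m\}$, where $m$ is a fresh unary relation symbol, is safe: \[\Pi^{\mathrm{sound}}_{\varphi}=\Big(\iota\wedge\forall x.\,\varphi(x)\to m(x),\ \ \tau\wedge\forall x.\,(m(x)\wedge\varphi(x)\wedge\varphi'(x))\to m'(x),\ \ \beta\wedge\forall x.\,\varphi(x)\to\neg m(x)\Big).\]
   Context: A first-order vocabulary $\Sigma$ consists of constant, function and relation symbols; $\Sigma'=\{a' : a\in\Sigma\}$ is a disjoint copy, and for a formula $\varphi$, $\varphi'$ denotes $\varphi$ with every vocabulary symbol replaced by its primed copy. A state is a first-order structure over the vocabulary. A safety problem is a triple $(\iota,\tau,\beta)$, where $\iota$ (initial states) and $\beta$ (bad states) are closed formulas over $\Sigma$ and $\tau$ (transitions) is a closed formula over $\Sigma\uplus\Sigma'$. A pair of states $(s,t)$ over a common domain is a transition if the structure interpreting the unprimed symbols as in $s$ and the primed ones as in $t$ satisfies $\tau$. A trace is a finite sequence of states over a common domain whose consecutive states form transitions; a trace from $\iota$ to $\beta$ is a trace $s_0,\dots,s_k$ with $s_0\models\iota$ and $s_k\models\beta$. The problem is safe if there is no trace from $\iota$ to $\beta$. $\varphi(w)$ denotes $\varphi$ with $x$ replaced by $w$. The safety problem $\Pi^w_\varphi$ over $\Sigma\cup\{w\}$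 is \[\Pi^w_\varphi=\big(\iota\wedge\varphi(w),\ \varphi(w)\wedge\tau\wedge w'=w\wedge(\varphi(w))',\ \beta\wedge\varphi(w)\big).\] $\varphi(w)$ is a sound prophecy for $\Pi$ if for every trace of $\Pi$ from $\iota$ to $\beta$ there exists an interpretation of $w$ such that the resulting sequence of states is a trace of $\Pi^w_\varphi$ from $\iota\wedge\varphi(w)$ to $\beta\wedge\varphi(w)$. *)

theory Defs
  imports Main
begin

datatype 'f trm = Var nat | Fn 'f "'f trm list"

datatype ('f, 'r) fm =
    FFalse
  | Eq "'f trm" "'f trm"
  | Rel 'r "'f trm list"
  | Neg "('f, 'r) fm"
  | Conj "('f, 'r) fm" "('f, 'r) fm"
  | Disj "('f, 'r) fm" "('f, 'r) fm"
  | Imp "('f, 'r) fm" "('f, 'r) fm"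
  | Forall nat "('f, 'r) fm"
  | Exists nat "('f, 'r) fm"

fun fv_trm :: "'f trm \<Rightarrow> nat set" where
  "fv_trm (Var n) = {n}"
| "fv_trm (Fn f ts) = (\<Union>t\<in>set ts. fv_trm t)"

fun fv :: "('f, 'r) fm \<Rightarrow> nat set" where
  "fv FFalse = {}"
| "fv (Eq s t) = fv_trm s \<union> fv_trm t"
| "fv (Rel r ts) = (\<Union>t\<in>set ts. fv_trm t)"
| "fv (Neg p) = fv p"
| "fv (Conj p q) = fv p \<union> fv q"
| "fv (Disj p q) = fv p \<union> fv q"
| "fv (Imp p q) = fv p \<union> fv q"
| "fv (Forall x p) = fv p - {x}"
| "fv (Exists x p) = fv p - {x}"

definition closed :: "('f, 'r) fm \<Rightarrow> bool" where
  "closed p \<longleftrightarrow> fv p = {}"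

text \<open>Substitution of a term for the free occurrences of variable x.
  (Only used with closed terms, so no variable capture can arise.)\<close>
fun subst_trm :: "nat \<Rightarrow> 'f trm \<Rightarrow> 'f trm \<Rightarrow> 'f trm" where
  "subst_trm x u (Var n) = (if n = x then u else Var n)"
| "subst_trm x u (Fn f ts) = Fn f (map (subst_trm x u) ts)"

fun subst :: "nat \<Rightarrow> 'f trm \<Rightarrow> ('f, 'r) fm \<Rightarrow> ('f, 'r) fm" where
  "subst x u FFalse = FFalse"
| "subst x u (Eq s t) = Eq (subst_trm x u s) (subst_trm x u t)"
| "subst x u (Rel r ts) = Rel r (map (subst_trm x u) ts)"
| "subst x u (Neg p) = Neg (subst x u p)"
| "subst x u (Conj p q) = Conj (subst x u p) (subst x u q)"
| "subst x u (Disj p q) = Disj (subst x u p) (subst x u q)"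
| "subst x u (Imp p q) = Imp (subst x u p) (subst x u q)"
| "subst x u (Forall y p) = (if y = x then Forall y p else Forall y (subst x u p))"
| "subst x u (Exists y p) = (if y = x then Exists y p else Exists y (subst x u p))"

text \<open>A structure with universe the type 'a (nonempty by construction): an interpretation
  of every function symbol and every relation symbol.\<close>
type_synonym ('f, 'r, 'a) struc = "('f \<Rightarrow> 'a list \<Rightarrow> 'a) \<times> ('r \<Rightarrow> 'a list \<Rightarrow> bool)"

fun eval_trm :: "('f, 'r, 'a) struc \<Rightarrow> (nat \<Rightarrow> 'a) \<Rightarrow> 'f trm \<Rightarrow> 'a" where
  "eval_trm S e (Var n) = e n"
| "eval_trm S e (Fn f ts) = fst S f (map (eval_trm S e) ts)"

fun eval :: "('f, 'r, 'a) struc \<Rightarrow> (nat \<Rightarrow> 'a) \<Rightarrow> ('f, 'r) fm \<Rightarrow> bool" where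
  "eval S e FFalse = False"
| "eval S e (Eq s t) = (eval_trm S e s = eval_trm S e t)"
| "eval S e (Rel r ts) = snd S r (map (eval_trm S e) ts)"
| "eval S e (Neg p) = (\<not> eval S e p)"
| "eval S e (Conj p q) = (eval S e p \<and> eval S e q)"
| "eval S e (Disj p q) = (eval S e p \<or> eval S e q)"
| "eval S e (Imp p q) = (eval S e p \<longrightarrow> eval S e q)"
| "eval S e (Forall x p) = (\<forall>a. eval S (e(x := a)) p)"
| "eval S e (Exists x p) = (\<exists>a. eval S (e(x := a)) p)"

definition models :: "('f, 'r, 'a) struc \<Rightarrow> ('f, 'r) fm \<Rightarrow> bool" where
  "models S p \<longleftrightarrow> (\<forall>e. eval S e p)"

text \<open>The vocabulary \<Sigma> \<uplus> \<Sigma>': Cur a is the symbol a, Nxt a is its primed copy a'.\<close>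
datatype 'a primed = Cur 'a | Nxt 'a

definition unprimed :: "('f, 'r) fm \<Rightarrow> ('f primed, 'r primed) fm" where
  "unprimed p = map_fm Cur Cur p"

definition prime :: "('f, 'r) fm \<Rightarrow> ('f primed, 'r primed) fm" where
  "prime p = map_fm Nxt Nxt p"

definition pair_struc :: "('f, 'r, 'a) struc \<Rightarrow> ('f, 'r, 'a) struc \<Rightarrow> ('f primed, 'r primed, 'a) struc" where
  "pair_struc s t =
     ((\<lambda>f. case f of Cur g \<Rightarrow> fst s g | Nxt g \<Rightarrow> fst t g),
      (\<lambda>r. case r of Cur q \<Rightarrow> snd s q | Nxt q \<Rightarrow> snd t q))"

type_synonym ('f, 'r) problem = "('f, 'r) fm \<times> ('f primed, 'r primed) fm \<times> ('f, 'r) fm"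

definition init :: "('f, 'r) problem \<Rightarrow> ('f, 'r) fm" where "init P = fst P"
definition trans :: "('f, 'r) problem \<Rightarrow> ('f primed, 'r primed) fm" where "trans P = fst (snd P)"
definition bad :: "('f, 'r) problem \<Rightarrow> ('f, 'r) fm" where "bad P = snd (snd P)"

definition is_problem :: "('f, 'r) problem \<Rightarrow> bool" where
  "is_problem P \<longleftrightarrow> closed (init P) \<and> closed (trans P) \<and> closed (bad P)"

definition is_transition :: "('f, 'r) problem \<Rightarrow> ('f, 'r, 'a) struc \<Rightarrow> ('f, 'r, 'a) struc \<Rightarrow> bool" where
  "is_transition P s t \<longleftrightarrow> models (pair_struc s t) (trans P)"

definition is_trace :: "('f, 'r) problem \<Rightarrow> ('f, 'r, 'a) struc list \<Rightarrow> bool" where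
  "is_trace P ss \<longleftrightarrow> ss \<noteq> [] \<and> (\<forall>i. Suc i < length ss \<longrightarrow> is_transition P (ss ! i) (ss ! Suc i))"

definition trace_init_bad :: "('f, 'r) problem \<Rightarrow> ('f, 'r, 'a) struc list \<Rightarrow> bool" where
  "trace_init_bad P ss \<longleftrightarrow> is_trace P ss \<and> models (hd ss) (init P) \<and> models (last ss) (bad P)"

definition safe_in :: "'a itself \<Rightarrow> ('f, 'r) problem \<Rightarrow> bool" where
  "safe_in _ P \<longleftrightarrow> \<not> (\<exists>ss :: ('f, 'r, 'a) struc list. trace_init_bad P ss)"

text \<open>Vocabulary \<Sigma> \<union> {w}: function symbols 'f option, the fresh constant w being None.\<close>
definition add_w :: "('f, 'r) fm \<Rightarrow> ('f option, 'r) fm" where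
  "add_w p = map_fm Some id p"

definition add_w2 :: "('f primed, 'r primed) fm \<Rightarrow> ('f option primed, 'r primed) fm" where
  "add_w2 p = map_fm (map_primed Some) id p"

definition w_const :: "'f option trm" where "w_const = Fn None []"

definition phi_w :: "nat \<Rightarrow> ('f, 'r) fm \<Rightarrow> ('f option, 'r) fm" where
  "phi_w x \<phi> = subst x w_const (add_w \<phi>)"

definition Pi_w :: "('f, 'r) problem \<Rightarrow> nat \<Rightarrow> ('f, 'r) fm \<Rightarrow> ('f option, 'r) problem" where
  "Pi_w P x \<phi> =
    (Conj (add_w (init P)) (phi_w x \<phi>),
     Conj (unprimed (phi_w x \<phi>))
       (Conj (add_w2 (trans P))
         (Conj (Eq (Fn (Nxt None) []) (Fn (Cur None) [])) (prime (phi_w x \<phi>)))),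
     Conj (add_w (bad P)) (phi_w x \<phi>))"

definition expand_w :: "'a \<Rightarrow> ('f, 'r, 'a) struc \<Rightarrow> ('f option, 'r, 'a) struc" where
  "expand_w c s = ((\<lambda>f. case f of None \<Rightarrow> (\<lambda>_. c) | Some g \<Rightarrow> fst s g), snd s)"

text \<open>\<phi>(w) is a sound prophecy for \<Pi> (traces over the domain 'a): every trace of \<Pi> from \<iota>
  to \<beta>, expanded with a single interpretation of w, is a trace of \<Pi>^w_\<phi> from its initial to
  its bad states.\<close>
definition sound_prophecy_in :: "'a itself \<Rightarrow> ('f, 'r) problem \<Rightarrow> nat \<Rightarrow> ('f, 'r) fm \<Rightarrow> bool" where
  "sound_prophecy_in _ P x \<phi> \<longleftrightarrow>
     (\<forall>ss :: ('f, 'r, 'a) struc list. trace_init_bad P ss \<longrightarrow>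
        (\<exists>c. trace_init_bad (Pi_w P x \<phi>) (map (expand_w c) ss)))"

text \<open>Vocabulary \<Sigma> \<union> {m}: relation symbols 'r option, the fresh unary relation m being None.\<close>
definition add_m :: "('f, 'r) fm \<Rightarrow> ('f, 'r option) fm" where
  "add_m p = map_fm id Some p"

definition add_m2 :: "('f primed, 'r primed) fm \<Rightarrow> ('f primed, 'r option primed) fm" where
  "add_m2 p = map_fm id (map_primed Some) p"

definition Pi_sound :: "('f, 'r) problem \<Rightarrow> nat \<Rightarrow> ('f, 'r) fm \<Rightarrow> ('f, 'r option) problem" where
  "Pi_sound P x \<phi> =
    (Conj (add_m (init P)) (Forall x (Imp (add_m \<phi>) (Rel None [Var x]))),
     Conj (add_m2 (trans P))
       (Forall x (Imp (Conj (Rel (Cur None) [Var x])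
                        (Conj (unprimed (add_m \<phi>)) (prime (add_m \<phi>))))
                  (Rel (Nxt None) [Var x]))),
     Conj (add_m (bad P)) (Forall x (Imp (add_m \<phi>) (Neg (Rel None [Var x])))))"

end

theory Submission
  imports Defs
begin

lemma eval_trm_map: "eval_trm S e (map_trm f t) = eval_trm (fst S \<circ> f, R) e t"
  by (induction t) (simp_all cong: map_cong)

lemma eval_map: "eval S e (map_fm f g p) = eval (fst S \<circ> f, snd S \<circ> g) e p"
  by (induction p arbitrary: e) (simp_all add: eval_trm_map[where R="snd S \<circ> g"] comp_def)

lemma eval_trm_subst: "eval_trm S e (subst_trm x (Fn h []) t) = eval_trm S (e(x := fst S h [])) t"
  by (induction t) (simp_all cong: map_cong)

lemma eval_subst: "eval S e (subst x (Fn h []) p) = eval S (e(x := fst S h [])) p"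
  by (induction p arbitrary: e) (auto simp: eval_trm_subst comp_def fun_upd_twist)

lemma eval_trm_env: "(\<forall>v\<in>fv_trm t. e v = e' v) \<Longrightarrow> eval_trm S e t = eval_trm S e' t"
proof (induction t)
  case (Fn f ts)
  then have "map (eval_trm S e) ts = map (eval_trm S e') ts" by (auto intro!: map_cong)
  then show ?case by (simp only: eval_trm.simps)
qed simp

lemma eval_env: "(\<forall>v\<in>fv p. e v = e' v) \<Longrightarrow> eval S e p = eval S e' p"
proof (induction p arbitrary: e e')
  case (Eq s t) then show ?case using eval_trm_env[of s e e' S] eval_trm_env[of t e e' S] by auto
next
  case (Rel r ts)
  then have "map (eval_trm S e) ts = map (eval_trm S e') ts"
    by (auto intro!: map_cong eval_trm_env)
  then show ?case by (simp only: eval.simps)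
next
  case (Neg p) then show ?case by simp
next
  case (Conj p q)
  then have "eval S e p = eval S e' p" "eval S e q = eval S e' q" by auto
  then show ?case by simp
next
  case (Disj p q)
  then have "eval S e p = eval S e' p" "eval S e q = eval S e' q" by auto
  then show ?case by simp
next
  case (Imp p q)
  then have "eval S e p = eval S e' p" "eval S e q = eval S e' q" by auto
  then show ?case by simp
next
  case (Forall y p)
  then have "\<And>a. eval S (e(y := a)) p = eval S (e'(y := a)) p" by auto
  then show ?case by simp
next
  case (Exists y p)
  then have "\<And>a. eval S (e(y := a)) p = eval S (e'(y := a)) p" by auto
  then show ?case by simp
qed simp

definition Phi :: "('f, 'r) fm \<Rightarrow> ('f, 'r, 'a) struc \<Rightarrow> 'a \<Rightarrow> bool" where
  "Phi \<phi> s a = eval s (\<lambda>_. a) \<phi>"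

lemma phi_env: "fv \<phi> \<subseteq> {x} \<Longrightarrow> eval s (e(x := a)) \<phi> = Phi \<phi> s a"
  unfolding Phi_def by (rule eval_env) auto

lemma L1: "eval (expand_w c s) e (add_w p) = eval s e p"
  by (simp add: add_w_def eval_map expand_w_def comp_def)

lemma L2: "eval (expand_w c s) e (phi_w x \<phi>) = eval s (e(x := c)) \<phi>"
  by (simp add: phi_w_def w_const_def eval_subst L1) (simp add: expand_w_def)

lemma L3: "eval (pair_struc (expand_w c s) (expand_w c t)) e (add_w2 p) = eval (pair_struc s t) e p"
proof -
  have "(fst (pair_struc (expand_w c s) (expand_w c t)) \<circ> map_primed Some,
         snd (pair_struc (expand_w c s) (expand_w c t)) \<circ> id) = pair_struc s t"
    by (auto simp: pair_struc_def expand_w_def fun_eq_iff split: primed.split)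
  then show ?thesis by (simp add: add_w2_def eval_map)
qed

lemma L4: "eval (pair_struc A B) e (unprimed p) = eval A e p"
  by (simp add: unprimed_def eval_map pair_struc_def comp_def)

lemma L4': "eval (pair_struc A B) e (prime p) = eval B e p"
  by (simp add: prime_def eval_map pair_struc_def comp_def)

definition restr :: "('f, 'r option, 'a) struc \<Rightarrow> ('f, 'r, 'a) struc" where
  "restr S = (fst S, \<lambda>r. snd S (Some r))"

definition ext :: "('a list \<Rightarrow> bool) \<Rightarrow> ('f, 'r, 'a) struc \<Rightarrow> ('f, 'r option, 'a) struc" where
  "ext M s = (fst s, \<lambda>r. case r of None \<Rightarrow> M | Some q \<Rightarrow> snd s q)"

lemma M1: "eval S e (add_m p) = eval (restr S) e p"
  by (simp add: add_m_def eval_map restr_def comp_def)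

lemma M2: "eval (pair_struc S T) e (add_m2 p) = eval (pair_struc (restr S) (restr T)) e p"
proof -
  have "(fst (pair_struc S T) \<circ> id, snd (pair_struc S T) \<circ> map_primed Some) = pair_struc (restr S) (restr T)"
    by (auto simp: pair_struc_def restr_def fun_eq_iff split: primed.split)
  then show ?thesis by (simp add: add_m2_def eval_map)
qed

lemma restr_ext[simp]: "restr (ext M s) = s"
  by (simp add: restr_def ext_def)

lemma snd_ext[simp]: "snd (ext M s) None = M"
  by (simp add: ext_def)

lemma models_closed: "closed p \<Longrightarrow> models S p = eval S e p"
  unfolding models_def closed_def using eval_env[of p e _ S] by auto


lemma W_eq[simp]: "fst (pair_struc (expand_w c s) (expand_w c t)) (Nxt None) = (\<lambda>_. c)"
   "fst (pair_struc (expand_w c s) (expand_w c t)) (Cur None) = (\<lambda>_. c)"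
  by (simp_all add: pair_struc_def expand_w_def fun_eq_iff)

lemma S_rel[simp]: "snd (pair_struc S T) (Cur r) = snd S r" "snd (pair_struc S T) (Nxt r) = snd T r"
  by (simp_all add: pair_struc_def)

lemma W_init: "fv \<phi> \<subseteq> {x} \<Longrightarrow> models (expand_w c s) (init (Pi_w P x \<phi>)) = (models s (init P) \<and> Phi \<phi> s c)"
  by (auto simp: models_def init_def Pi_w_def L1 L2 phi_env)

lemma W_bad: "fv \<phi> \<subseteq> {x} \<Longrightarrow> models (expand_w c s) (bad (Pi_w P x \<phi>)) = (models s (bad P) \<and> Phi \<phi> s c)"
  by (auto simp: models_def bad_def Pi_w_def L1 L2 phi_env)

lemma W_trans: "fv \<phi> \<subseteq> {x} \<Longrightarrow> is_transition (Pi_w P x \<phi>) (expand_w c s) (expand_w c t)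
   = (Phi \<phi> s c \<and> is_transition P s t \<and> Phi \<phi> t c)"
  by (auto simp: is_transition_def models_def trans_def Pi_w_def L1 L2 L3 L4 L4' phi_env)

lemma S_init: "fv \<phi> \<subseteq> {x} \<Longrightarrow> models S (init (Pi_sound P x \<phi>)) =
   (models (restr S) (init P) \<and> (\<forall>a. Phi \<phi> (restr S) a \<longrightarrow> snd S None [a]))"
  by (auto simp: models_def init_def Pi_sound_def M1 phi_env)

lemma S_bad: "fv \<phi> \<subseteq> {x} \<Longrightarrow> models S (bad (Pi_sound P x \<phi>)) =
   (models (restr S) (bad P) \<and> (\<forall>a. Phi \<phi> (restr S) a \<longrightarrow> \<not> snd S None [a]))"
  by (auto simp: models_def bad_def Pi_sound_def M1 phi_env)

lemma S_trans: "fv \<phi> \<subseteq> {x} \<Longrightarrow> is_transition (Pi_sound P x \<phi>) S T =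
   (is_transition P (restr S) (restr T) \<and>
    (\<forall>a. snd S None [a] \<and> Phi \<phi> (restr S) a \<and> Phi \<phi> (restr T) a \<longrightarrow> snd T None [a]))"
  by (auto simp: is_transition_def models_def trans_def Pi_sound_def M1 M2 L4 L4' phi_env)

lemma traceW:
  assumes "fv \<phi> \<subseteq> {x}"
  shows "trace_init_bad (Pi_w P x \<phi>) (map (expand_w c) ss) \<longleftrightarrow>
     trace_init_bad P ss \<and> (\<forall>i<length ss. Phi \<phi> (ss!i) c)"
proof
  assume A: "trace_init_bad (Pi_w P x \<phi>) (map (expand_w c) ss)"
  then have ne: "ss \<noteq> []" by (simp add: trace_init_bad_def is_trace_def)
  have tr: "\<And>i. Suc i < length ss \<Longrightarrow> Phi \<phi> (ss!i) c \<and> is_transition P (ss!i) (ss!Suc i) \<and> Phi \<phi> (ss!Suc i) c"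
    using A by (auto simp: trace_init_bad_def is_trace_def W_trans[OF assms])
  have hd: "models (hd ss) (init P) \<and> Phi \<phi> (hd ss) c"
    using A ne by (simp add: trace_init_bad_def hd_map W_init[OF assms])
  have lst: "models (last ss) (bad P)"
    using A ne by (simp add: trace_init_bad_def last_map W_bad[OF assms])
  have "\<forall>i<length ss. Phi \<phi> (ss!i) c"
  proof (intro allI impI)
    fix i assume "i < length ss"
    then show "Phi \<phi> (ss!i) c"
      using tr hd ne by (cases i) (auto simp: hd_conv_nth)
  qed
  then show "trace_init_bad P ss \<and> (\<forall>i<length ss. Phi \<phi> (ss!i) c)"
    using tr hd lst ne by (auto simp: trace_init_bad_def is_trace_def)
next
  assume A: "trace_init_bad P ss \<and> (\<forall>i<length ss. Phi \<phi> (ss!i) c)"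
  then have ne: "ss \<noteq> []" by (simp add: trace_init_bad_def is_trace_def)
  have "Phi \<phi> (hd ss) c" "Phi \<phi> (last ss) c"
    using A ne by (auto simp: hd_conv_nth last_conv_nth)
  then show "trace_init_bad (Pi_w P x \<phi>) (map (expand_w c) ss)"
    using A ne by (auto simp: trace_init_bad_def is_trace_def hd_map last_map
        W_init[OF assms] W_bad[OF assms] W_trans[OF assms])
qed

theorem theorem5p2:
  fixes P :: "('f, 'r) problem" and x :: nat and \<phi> :: "('f, 'r) fm"
  assumes "is_problem P"
    and "fv \<phi> \<subseteq> {x}"
  shows "sound_prophecy_in TYPE('a) P x \<phi> \<longleftrightarrow> safe_in TYPE('a) (Pi_sound P x \<phi>)"
proof
  assume snd: "sound_prophecy_in TYPE('a) P x \<phi>"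
  show "safe_in TYPE('a) (Pi_sound P x \<phi>)"
    unfolding safe_in_def
  proof
    assume "\<exists>SS :: ('f, 'r option, 'a) struc list. trace_init_bad (Pi_sound P x \<phi>) SS"
    then obtain SS :: "('f, 'r option, 'a) struc list" where T: "trace_init_bad (Pi_sound P x \<phi>) SS" by blast
    then have ne: "SS \<noteq> []" by (simp add: trace_init_bad_def is_trace_def)
    have tr: "\<And>i. Suc i < length SS \<Longrightarrow> is_transition (Pi_sound P x \<phi>) (SS!i) (SS!Suc i)"
      using T by (simp add: trace_init_bad_def is_trace_def)
    have i0: "models (SS!0) (init (Pi_sound P x \<phi>))"
      using T ne by (simp add: trace_init_bad_def hd_conv_nth)
    have bk: "models (SS!(length SS - 1)) (bad (Pi_sound P x \<phi>))"
      using T ne by (simp add: trace_init_bad_def last_conv_nth)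
    define ss where "ss = map restr SS"
    have "trace_init_bad P ss"
      unfolding trace_init_bad_def is_trace_def ss_def
      using ne tr i0 bk by (auto simp: S_trans[OF assms(2)] S_init[OF assms(2)] S_bad[OF assms(2)]
          hd_conv_nth last_conv_nth)
    with snd obtain c where "trace_init_bad (Pi_w P x \<phi>) (map (expand_w c) ss)"
      unfolding sound_prophecy_in_def by blast
    then have "\<forall>i<length ss. Phi \<phi> (ss!i) c"
      by (simp add: traceW[OF assms(2)])
    then have ph: "\<forall>i<length SS. Phi \<phi> (restr (SS!i)) c"
      by (simp add: ss_def)
    have m: "i < length SS \<Longrightarrow> snd (SS!i) None [c]" for i
    proof (induction i)
      case 0 then show ?case using i0 ph by (auto simp: S_init[OF assms(2)])
    next
      case (Suc i) then show ?case using tr[of i] ph by (auto simp: S_trans[OF assms(2)])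
    qed
    have "length SS - 1 < length SS" using ne by simp
    then show False using m[of "length SS - 1"] ph bk by (auto simp: S_bad[OF assms(2)])
  qed
next
  assume sf: "safe_in TYPE('a) (Pi_sound P x \<phi>)"
  show "sound_prophecy_in TYPE('a) P x \<phi>"
    unfolding sound_prophecy_in_def
  proof (intro allI impI)
    fix ss :: "('f, 'r, 'a) struc list"
    assume T: "trace_init_bad P ss"
    show "\<exists>c. trace_init_bad (Pi_w P x \<phi>) (map (expand_w c) ss)"
    proof (rule ccontr)
      assume "\<not> ?thesis"
      then have nc: "\<forall>c. \<exists>j<length ss. \<not> Phi \<phi> (ss!j) c"
        using T by (auto simp: traceW[OF assms(2)])
      have ne: "ss \<noteq> []" using T by (simp add: trace_init_bad_def is_trace_def)
      define SS where "SS = map (\<lambda>i. ext (\<lambda>l. \<forall>j\<le>i. Phi \<phi> (ss!j) (hd l)) (ss!i)) [0..<length ss]"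
      have len: "length SS = length ss" by (simp add: SS_def)
      have nc': "\<exists>j\<le>length ss - Suc 0. \<not> Phi \<phi> (ss!j) a" for a
      proof -
        obtain j where "j < length ss" "\<not> Phi \<phi> (ss!j) a" using nc by blast
        then show ?thesis by (intro exI[of _ j]) auto
      qed
      have neS: "SS \<noteq> []" using ne len by auto
      have nth: "i < length ss \<Longrightarrow> SS!i = ext (\<lambda>l. \<forall>j\<le>i. Phi \<phi> (ss!j) (hd l)) (ss!i)" for i
        by (simp add: SS_def)
      have tr: "\<And>i. Suc i < length ss \<Longrightarrow> is_transition P (ss!i) (ss!Suc i)"
        using T by (simp add: trace_init_bad_def is_trace_def)
      have i0: "models (ss!0) (init P)"
        using T ne by (simp add: trace_init_bad_def hd_conv_nth)
      have bk: "models (ss!(length ss - 1)) (bad P)"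
        using T ne by (simp add: trace_init_bad_def last_conv_nth)
      have "trace_init_bad (Pi_sound P x \<phi>) SS"
        unfolding trace_init_bad_def is_trace_def
      proof (intro conjI allI impI)
        show "SS \<noteq> []" using ne len by auto
        fix i assume "Suc i < length SS"
        then show "is_transition (Pi_sound P x \<phi>) (SS ! i) (SS ! Suc i)"
          using tr[of i] len nth[of i] nth[of "Suc i"]
          by (auto simp: S_trans[OF assms(2)] le_Suc_eq)
      next
        show "models (hd SS) (init (Pi_sound P x \<phi>))"
          using ne neS len nth[of 0] i0 by (auto simp: hd_conv_nth S_init[OF assms(2)])
      next
        have "length ss - 1 < length ss" using ne by simp
        then show "models (last SS) (bad (Pi_sound P x \<phi>))"
          using ne neS len nth[of "length ss - 1"] bk nc'
          by (auto simp: last_conv_nth S_bad[OF assms(2)])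
      qed
      with sf show False unfolding safe_in_def by blast
    qed
  qed
qed

end
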